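(* Let $T>0$ and $I\geq 1$. Consider the system of renewal equations, for $1\leq i\leq I$, $t\in\mathbb{R}$, $x\geq 0$, $$\partial_t n_i(t,x)+\partial_x n_i(t,x)+d_i(t,x)\,n_i(t,x)=0,\qquad n_i(t,0)=\sum_{j=1}^I\int_0^\infty B_{j\rightarrow i}(t,x)\,n_j(t,x)\,dx,$$ with nonnegative coefficients $d_i$, $B_{j\rightarrow i}$ that are $T$-periodic in $t$. Let $(B^1_{j\rightarrow i},d^1_i)_{1\leq i,j\leq I}$ and $(B^2_{j\rightarrow i},d^2_i)_{1\leq i,j\leq I}$ be two such sets of coefficients, with associated dominant (Floquet) eigenvalues $\lambda_F^1$ and $\lambda_F^2$. For $\theta\in[0,1]$ set $$d_i^\theta=\theta d_i^1+(1-\theta)d_i^2,\qquad B^\theta_{j\rightarrow i}=(B^1_{j\rightarrow i})^\theta(B^2_{j\rightarrow i})^{1-\theta},$$ and let $\lambda_F^\theta$ be the dominant eigenvalue associated with the coefficients $(B^\theta_{j\rightarrow i},d_i^\theta)$. Then for every $\theta\in[0,1]$, $$\lambda_F^\theta\leq \theta\lambda_F^1+(1-\theta)\lambda_F^2.$$ That is, the dominant eigenvalue is convex with respect to the death rates $d_i$ and geometrically convex with respect to the birth rates $B_{j\rightarrow i}$.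
   Context: The dominant (Floquet) eigenvalue $\lambda_F$ of the system is the real number governing the growth of solutions (solutions behave like $e^{\lambda_F t}$ times a bounded term). When positive $T$-periodic eigenelements exist, $\lambda_F$ is the unique real $\lambda$ for which there exist nonnegative, nonzero, $T$-periodic $N_i$ with $\partial_t N_i+\partial_x N_i+(d_i+\lambda)N_i=0$, $N_i(t,0)=\sum_j\int_0^\infty B_{j\rightarrow i}N_j\,dx$, together with positive $T$-periodic dual eigenfunctions $\phi_j$ satisfying $-\partial_t\phi_j-\partial_x\phi_j+(d_j+\lambda)\phi_j=\sum_i B_{j\rightarrow i}(t,x)\phi_i(t,0)$. In general (Collatz–Wielandt type definition), $\lambda_F$ is the infimum of the reals $\mu$ for which there exist positive functions $\phi_{\mu,j}$, $T$-periodic in $t$, with $-\partial_t\phi_{\mu,j}(t,x)-\partial_x\phi_{\mu,j}(t,x)+[d_j(t,x)+\mu]\phi_{\mu,j}(t,x)\geq\sum_i B_{j\rightarrow i}(t,x)\phi_{\mu,i}(t,0)$; the two definitions coincide when eigenelements exist. *)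

theory Defs
  imports "HOL-Analysis.Analysis"
begin

text \<open>Coefficients: indices range over {1..I}; d i t x is the death rate d_i(t,x);
  B j i t x is the birth kernel B_{j -> i}(t,x); functions are of t \<in> \<real>, x \<ge> 0.\<close>

definition periodic_coeffs ::
  "nat \<Rightarrow> real \<Rightarrow> (nat \<Rightarrow> nat \<Rightarrow> real \<Rightarrow> real \<Rightarrow> real) \<Rightarrow> (nat \<Rightarrow> real \<Rightarrow> real \<Rightarrow> real) \<Rightarrow> bool" where
  "periodic_coeffs I T B d \<longleftrightarrow>
     (\<forall>i\<in>{1..I}. \<forall>t x. x \<ge> 0 \<longrightarrow> d i t x \<ge> 0 \<and> d i (t + T) x = d i t x) \<and>
     (\<forall>i\<in>{1..I}. \<forall>j\<in>{1..I}. \<forall>t x. x \<ge> 0 \<longrightarrow> B j i t x \<ge> 0 \<and> B j i (t + T) x = B j i t x)"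

text \<open>The transport operator \<partial>_t + \<partial>_x is understood as the derivative along the
  characteristic s \<mapsto> (t+s, x+s) (one-sided at the boundary x = 0).\<close>

definition supersol ::
  "nat \<Rightarrow> real \<Rightarrow> (nat \<Rightarrow> nat \<Rightarrow> real \<Rightarrow> real \<Rightarrow> real) \<Rightarrow> (nat \<Rightarrow> real \<Rightarrow> real \<Rightarrow> real)
     \<Rightarrow> real \<Rightarrow> (nat \<Rightarrow> real \<Rightarrow> real \<Rightarrow> real) \<Rightarrow> bool" where
  "supersol I T B d \<mu> \<phi> \<longleftrightarrow>
     (\<forall>j\<in>{1..I}. \<forall>t x. x \<ge> 0 \<longrightarrow>
        \<phi> j t x > 0 \<and> \<phi> j (t + T) x = \<phi> j t x \<and>
        (\<exists>D. ((\<lambda>s. \<phi> j (t + s) (x + s)) has_real_derivative D) (at 0 within {-x..}) \<and>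
             - D + (d j t x + \<mu>) * \<phi> j t x \<ge> (\<Sum>i\<in>{1..I}. B j i t x * \<phi> i t 0)))"

text \<open>Dominant (Floquet) eigenvalue, Collatz--Wielandt definition: the infimum of the
  admissible \<mu>, taken in the extended reals (= \<infinity> if no such \<mu>, -\<infinity> if unbounded below).\<close>

definition floquet ::
  "nat \<Rightarrow> real \<Rightarrow> (nat \<Rightarrow> nat \<Rightarrow> real \<Rightarrow> real \<Rightarrow> real) \<Rightarrow> (nat \<Rightarrow> real \<Rightarrow> real \<Rightarrow> real) \<Rightarrow> ereal" where
  "floquet I T B d = Inf (ereal ` {\<mu>. \<exists>\<phi>. supersol I T B d \<mu> \<phi>})"

definition rpow :: "real \<Rightarrow> real \<Rightarrow> real" where
  "rpow a e = (if e = 0 then 1 else a powr e)"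

end

theory Submission
  imports Defs
begin

lemma amgm:
  fixes a b \<theta> :: real
  assumes "a \<ge> 0" "b \<ge> 0" "0 \<le> \<theta>" "\<theta> \<le> 1"
  shows "rpow a \<theta> * rpow b (1-\<theta>) \<le> \<theta>*a + (1-\<theta>)*b"
proof (cases "\<theta> = 0 \<or> \<theta> = 1")
  case True thus ?thesis using assms by (auto simp: rpow_def)
next
  case False
  hence th: "0 < \<theta>" "\<theta> < 1" using assms by auto
  show ?thesis
  proof (cases "a = 0 \<or> b = 0")
    case True thus ?thesis using assms th by (auto simp: rpow_def)
  next
    case False
    hence ab: "a > 0" "b > 0" using assms by auto
    have "rpow a \<theta> * rpow b (1-\<theta>) = exp ((1-(1-\<theta>)) *\<^sub>R ln a + (1-\<theta>) *\<^sub>R ln b)"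
      using th ab by (simp add: rpow_def powr_def exp_add)
    also have "\<dots> \<le> (1-(1-\<theta>)) * exp (ln a) + (1-\<theta>) * exp (ln b)"
      by (rule convex_onD[OF exp_convex]) (use th in auto)
    finally show ?thesis using ab by simp
  qed
qed

lemma rpow_mult_pos:
  assumes "b \<ge> 0" "c > 0"
  shows "rpow (b * c) e = rpow b e * exp (e * ln c)"
  using assms by (auto simp: rpow_def powr_mult powr_def ln_mult distrib_left exp_add)

lemma combine:
  fixes \<theta> :: real
  assumes P1: "periodic_coeffs I T B1 d1" and P2: "periodic_coeffs I T B2 d2"
    and S1: "supersol I T B1 d1 \<mu>1 \<phi>1" and S2: "supersol I T B2 d2 \<mu>2 \<phi>2"
    and th: "0 \<le> \<theta>" "\<theta> \<le> 1"
  shows "supersol I T (\<lambda>j i t x. rpow (B1 j i t x) \<theta> * rpow (B2 j i t x) (1 - \<theta>))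
                     (\<lambda>i t x. \<theta> * d1 i t x + (1 - \<theta>) * d2 i t x) (\<theta>*\<mu>1 + (1-\<theta>)*\<mu>2)
           (\<lambda>j t x. exp (\<theta> * ln (\<phi>1 j t x) + (1-\<theta>) * ln (\<phi>2 j t x)))"
  unfolding supersol_def
proof (intro ballI allI impI conjI)
  fix j t x assume j: "j \<in> {1..I}" and x: "(0::real) \<le> x"
  show "0 < exp (\<theta> * ln (\<phi>1 j t x) + (1-\<theta>) * ln (\<phi>2 j t x))" by simp
  show "exp (\<theta> * ln (\<phi>1 j (t+T) x) + (1-\<theta>) * ln (\<phi>2 j (t+T) x)) =
        exp (\<theta> * ln (\<phi>1 j t x) + (1-\<theta>) * ln (\<phi>2 j t x))"
    using S1 S2 j x unfolding supersol_def by simp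
  from S1 j x obtain D1 where p1: "\<phi>1 j t x > 0"
    and D1: "((\<lambda>s. \<phi>1 j (t + s) (x + s)) has_real_derivative D1) (at 0 within {-x..})"
    and I1: "- D1 + (d1 j t x + \<mu>1) * \<phi>1 j t x \<ge> (\<Sum>i\<in>{1..I}. B1 j i t x * \<phi>1 i t 0)"
    unfolding supersol_def by blast
  from S2 j x obtain D2 where p2: "\<phi>2 j t x > 0"
    and D2: "((\<lambda>s. \<phi>2 j (t + s) (x + s)) has_real_derivative D2) (at 0 within {-x..})"
    and I2: "- D2 + (d2 j t x + \<mu>2) * \<phi>2 j t x \<ge> (\<Sum>i\<in>{1..I}. B2 j i t x * \<phi>2 i t 0)"
    unfolding supersol_def by blast
  define P1 where "P1 = \<phi>1 j t x"
  define P2 where "P2 = \<phi>2 j t x"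
  define P where "P = exp (\<theta> * ln P1 + (1-\<theta>) * ln P2)"
  define u where "u = P / P1"
  define v where "v = P / P2"
  have pp: "P1 > 0" "P2 > 0" "P > 0" using p1 p2 by (auto simp: P1_def P2_def P_def)
  have uv: "u > 0" "v > 0" using pp by (auto simp: u_def v_def)
  have lnP: "ln P = \<theta> * ln P1 + (1-\<theta>) * ln P2" by (simp add: P_def)
  have lnu: "ln u = ln P - ln P1" using pp by (simp add: u_def ln_div)
  have lnv: "ln v = ln P - ln P2" using pp by (simp add: v_def ln_div)
  let ?D = "P * (\<theta> * (D1 / P1) + (1-\<theta>) * (D2 / P2))"
  have DD: "((\<lambda>s. exp (\<theta> * ln (\<phi>1 j (t + s) (x + s)) + (1-\<theta>) * ln (\<phi>2 j (t + s) (x + s))))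
          has_real_derivative ?D) (at 0 within {-x..})"
    using D1 D2 pp unfolding P_def P1_def P2_def
    by (auto intro!: derivative_eq_intros simp: field_simps)
  have tm: "rpow (B1 j i t x) \<theta> * rpow (B2 j i t x) (1 - \<theta>) *
            exp (\<theta> * ln (\<phi>1 i t 0) + (1-\<theta>) * ln (\<phi>2 i t 0))
         \<le> \<theta> * u * (B1 j i t x * \<phi>1 i t 0) + (1-\<theta>) * v * (B2 j i t x * \<phi>2 i t 0)"
    if i: "i \<in> {1..I}" for i
  proof -
    have b1: "B1 j i t x \<ge> 0" using P1 i j x unfolding periodic_coeffs_def by blast
    have b2: "B2 j i t x \<ge> 0" using P2 i j x unfolding periodic_coeffs_def by blast
    have c1: "\<phi>1 i t 0 > 0" using S1 i unfolding supersol_def by auto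
    have c2: "\<phi>2 i t 0 > 0" using S2 i unfolding supersol_def by auto
    have "rpow (B1 j i t x * (\<phi>1 i t 0 * u)) \<theta> * rpow (B2 j i t x * (\<phi>2 i t 0 * v)) (1-\<theta>)
        \<le> \<theta> * (B1 j i t x * (\<phi>1 i t 0 * u)) + (1-\<theta>) * (B2 j i t x * (\<phi>2 i t 0 * v))"
      by (rule amgm) (use b1 b2 c1 c2 uv th in auto)
    moreover have "rpow (B1 j i t x * (\<phi>1 i t 0 * u)) \<theta> * rpow (B2 j i t x * (\<phi>2 i t 0 * v)) (1-\<theta>)
       = rpow (B1 j i t x) \<theta> * rpow (B2 j i t x) (1 - \<theta>) *
            exp (\<theta> * ln (\<phi>1 i t 0) + (1-\<theta>) * ln (\<phi>2 i t 0))"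
    proof -
      have e: "exp (\<theta> * ln (\<phi>1 i t 0 * u)) * exp ((1-\<theta>) * ln (\<phi>2 i t 0 * v))
          = exp (\<theta> * ln (\<phi>1 i t 0) + (1-\<theta>) * ln (\<phi>2 i t 0))"
      proof -
        have "\<theta> * ln (\<phi>1 i t 0 * u) + (1-\<theta>) * ln (\<phi>2 i t 0 * v)
            = \<theta> * ln (\<phi>1 i t 0) + (1-\<theta>) * ln (\<phi>2 i t 0)"
          using c1 c2 uv by (simp add: ln_mult lnu lnv lnP algebra_simps)
        thus ?thesis by (simp flip: exp_add)
      qed
      show ?thesis using b1 b2 c1 c2 uv
        by (simp add: rpow_mult_pos e[symmetric])
    qed
    ultimately show ?thesis by (simp add: algebra_simps)
  qed
  have "(\<Sum>i\<in>{1..I}. rpow (B1 j i t x) \<theta> * rpow (B2 j i t x) (1 - \<theta>) *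
            exp (\<theta> * ln (\<phi>1 i t 0) + (1-\<theta>) * ln (\<phi>2 i t 0)))
       \<le> (\<Sum>i\<in>{1..I}. \<theta> * u * (B1 j i t x * \<phi>1 i t 0) + (1-\<theta>) * v * (B2 j i t x * \<phi>2 i t 0))"
    by (rule sum_mono) (rule tm)
  also have "\<dots> = \<theta> * u * (\<Sum>i\<in>{1..I}. B1 j i t x * \<phi>1 i t 0) + (1-\<theta>) * v * (\<Sum>i\<in>{1..I}. B2 j i t x * \<phi>2 i t 0)"
    by (simp add: sum.distrib sum_distrib_left)
  also have "\<dots> \<le> \<theta> * u * (- D1 + (d1 j t x + \<mu>1) * P1) + (1-\<theta>) * v * (- D2 + (d2 j t x + \<mu>2) * P2)"
    apply (rule add_mono; rule mult_left_mono)
    using I1 I2 th uv by (auto simp: P1_def P2_def)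
  also have "\<dots> = - ?D + ((\<theta> * d1 j t x + (1-\<theta>) * d2 j t x) + (\<theta>*\<mu>1 + (1-\<theta>)*\<mu>2)) * P"
    using pp by (simp add: u_def v_def field_simps)
  finally have II: "(\<Sum>i\<in>{1..I}. rpow (B1 j i t x) \<theta> * rpow (B2 j i t x) (1 - \<theta>) *
            exp (\<theta> * ln (\<phi>1 i t 0) + (1-\<theta>) * ln (\<phi>2 i t 0)))
       \<le> - ?D + ((\<theta> * d1 j t x + (1-\<theta>) * d2 j t x) + (\<theta>*\<mu>1 + (1-\<theta>)*\<mu>2)) * P" .
  show "\<exists>D. ((\<lambda>s. exp (\<theta> * ln (\<phi>1 j (t + s) (x + s)) + (1-\<theta>) * ln (\<phi>2 j (t + s) (x + s))))
          has_real_derivative D) (at 0 within {-x..}) \<and>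
       (\<Sum>i\<in>{1..I}. rpow (B1 j i t x) \<theta> * rpow (B2 j i t x) (1 - \<theta>) *
            exp (\<theta> * ln (\<phi>1 i t 0) + (1-\<theta>) * ln (\<phi>2 i t 0)))
       \<le> - D + ((\<theta> * d1 j t x + (1-\<theta>) * d2 j t x) + (\<theta>*\<mu>1 + (1-\<theta>)*\<mu>2)) *
          exp (\<theta> * ln (\<phi>1 j t x) + (1-\<theta>) * ln (\<phi>2 j t x))"
    using DD II unfolding P_def P1_def P2_def by blast
qed


lemma inf_combine:
  fixes S1 S2 :: "real set" and X :: ereal and \<theta> :: real
  assumes ne: "S1 \<noteq> {}" "S2 \<noteq> {}" and th: "0 \<le> \<theta>" "\<theta> \<le> 1"
    and H: "\<And>m1 m2. m1 \<in> S1 \<Longrightarrow> m2 \<in> S2 \<Longrightarrow> X \<le> ereal (\<theta>*m1 + (1-\<theta>)*m2)"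
  shows "X \<le> ereal \<theta> * Inf (ereal ` S1) + ereal (1-\<theta>) * Inf (ereal ` S2)"
proof -
  obtain a1 where a1: "a1 \<in> S1" using ne by auto
  obtain a2 where a2: "a2 \<in> S2" using ne by auto
  show ?thesis
  proof (cases "\<theta> = 0")
    case True
    have "X \<le> Inf (ereal ` S2)"
      by (rule Inf_greatest) (use H[OF a1] True in auto)
    moreover have "ereal 0 * Inf (ereal ` S1) + ereal (1 - 0) * Inf (ereal ` S2) = Inf (ereal ` S2)"
      by (simp only: diff_zero zero_ereal_def[symmetric] one_ereal_def[symmetric] ereal_zero_mult mult_1 add_0)
    ultimately show ?thesis using True by simp
  next
    case F0: False
    show ?thesis
    proof (cases "\<theta> = 1")
      case True
      have "X \<le> Inf (ereal ` S1)"
        by (rule Inf_greatest) (use H[OF _ a2] True in auto)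
      moreover have "ereal 1 * Inf (ereal ` S1) + ereal (1 - 1) * Inf (ereal ` S2) = Inf (ereal ` S1)"
        by (simp only: diff_self zero_ereal_def[symmetric] one_ereal_def[symmetric] ereal_zero_mult mult_1 add_0_right)
      ultimately show ?thesis using True by simp
    next
      case F1: False
      have t0: "0 < \<theta>" "\<theta> < 1" using th F0 F1 by auto
      show ?thesis
      proof (rule ccontr)
        assume "\<not> ?thesis"
        hence "ereal \<theta> * Inf (ereal ` S1) + ereal (1-\<theta>) * Inf (ereal ` S2) < X" by (simp only: not_le)
        then obtain z where z1: "ereal \<theta> * Inf (ereal ` S1) + ereal (1-\<theta>) * Inf (ereal ` S2) < ereal z"
          and z2: "ereal z < X" using ereal_dense2 by blast
        have fin1: "Inf (ereal ` S1) \<noteq> \<infinity>"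
          using Inf_lower[of "ereal a1" "ereal ` S1"] a1 by auto
        have fin2: "Inf (ereal ` S2) \<noteq> \<infinity>"
          using Inf_lower[of "ereal a2" "ereal ` S2"] a2 by auto
        have "\<exists>m1\<in>S1. \<exists>m2\<in>S2. \<theta>*m1 + (1-\<theta>)*m2 < z"
        proof (cases "Inf (ereal ` S1) = -\<infinity>")
          case True
          then have "Inf (ereal ` S1) < ereal ((z - (1-\<theta>)*a2)/\<theta>)" by simp
          then obtain m1 where m1: "m1 \<in> S1" "m1 < (z - (1-\<theta>)*a2)/\<theta>"
            by (auto simp: Inf_less_iff)
          hence "\<theta>*m1 < z - (1-\<theta>)*a2" using t0 by (simp add: pos_less_divide_eq mult.commute)
          thus ?thesis using m1 a2 by (intro bexI[of _ m1] bexI[of _ a2]) auto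
        next
          case N1: False
          show ?thesis
          proof (cases "Inf (ereal ` S2) = -\<infinity>")
            case True
            then have "Inf (ereal ` S2) < ereal ((z - \<theta>*a1)/(1-\<theta>))" by simp
            then obtain m2 where m2: "m2 \<in> S2" "m2 < (z - \<theta>*a1)/(1-\<theta>)"
              by (auto simp: Inf_less_iff)
            hence "(1-\<theta>)*m2 < z - \<theta>*a1" using t0 by (simp add: pos_less_divide_eq mult.commute)
            thus ?thesis using m2 a1 by (intro bexI[of _ a1] bexI[of _ m2]) auto
          next
            case N2: False
            obtain r1 where r1: "Inf (ereal ` S1) = ereal r1" using N1 fin1 by (cases "Inf (ereal ` S1)") auto
            obtain r2 where r2: "Inf (ereal ` S2) = ereal r2" using N2 fin2 by (cases "Inf (ereal ` S2)") auto
            define e where "e = z - (\<theta>*r1 + (1-\<theta>)*r2)"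
            have e: "e > 0" using z1 r1 r2 by (simp add: e_def)
            have "Inf (ereal ` S1) < ereal (r1 + e/2)" using r1 e by simp
            then obtain m1 where m1: "m1 \<in> S1" "m1 < r1 + e/2" by (auto simp: Inf_less_iff)
            have "Inf (ereal ` S2) < ereal (r2 + e/2)" using r2 e by simp
            then obtain m2 where m2: "m2 \<in> S2" "m2 < r2 + e/2" by (auto simp: Inf_less_iff)
            have "\<theta>*m1 \<le> \<theta>*(r1+e/2)" using m1 t0 by (intro mult_left_mono) auto
            moreover have "(1-\<theta>)*m2 \<le> (1-\<theta>)*(r2+e/2)" using m2 t0 by (intro mult_left_mono) auto
            moreover have "\<theta>*(r1+e/2) + (1-\<theta>)*(r2+e/2) = z - e/2"
              unfolding e_def by (simp add: field_simps)
            ultimately have "\<theta>*m1 + (1-\<theta>)*m2 \<le> z - e/2" by linarith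
            thus ?thesis using m1 m2 e by (intro bexI[of _ m1] bexI[of _ m2]) auto
          qed
        qed
        then obtain m1 m2 where "m1 \<in> S1" "m2 \<in> S2" "\<theta>*m1 + (1-\<theta>)*m2 < z" by blast
        note mm = this
        have "X \<le> ereal (\<theta>*m1 + (1-\<theta>)*m2)" using H mm(1,2) by blast
        also have "\<dots> < ereal z" using mm(3) by simp
        finally show False using z2 by simp
      qed
    qed
  qed
qed

theorem theorem1:
  fixes I :: nat and T \<theta> :: real
    and B1 B2 :: "nat \<Rightarrow> nat \<Rightarrow> real \<Rightarrow> real \<Rightarrow> real"
    and d1 d2 :: "nat \<Rightarrow> real \<Rightarrow> real \<Rightarrow> real"
  assumes "T > 0" and "I \<ge> 1"
    and "periodic_coeffs I T B1 d1" and "periodic_coeffs I T B2 d2"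
    and "floquet I T B1 d1 < \<infinity>" and "floquet I T B2 d2 < \<infinity>"
    and "0 \<le> \<theta>" and "\<theta> \<le> 1"
  shows "floquet I T (\<lambda>j i t x. rpow (B1 j i t x) \<theta> * rpow (B2 j i t x) (1 - \<theta>))
                     (\<lambda>i t x. \<theta> * d1 i t x + (1 - \<theta>) * d2 i t x)
         \<le> ereal \<theta> * floquet I T B1 d1 + ereal (1 - \<theta>) * floquet I T B2 d2"
proof -
  let ?S1 = "{\<mu>. \<exists>\<phi>. supersol I T B1 d1 \<mu> \<phi>}"
  let ?S2 = "{\<mu>. \<exists>\<phi>. supersol I T B2 d2 \<mu> \<phi>}"
  have ne1: "?S1 \<noteq> {}"
  proof
    assume e: "?S1 = {}"
    have "floquet I T B1 d1 = \<infinity>" unfolding floquet_def e by (simp add: top_ereal_def)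
    thus False using assms(5) by simp
  qed
  have ne2: "?S2 \<noteq> {}"
  proof
    assume e: "?S2 = {}"
    have "floquet I T B2 d2 = \<infinity>" unfolding floquet_def e by (simp add: top_ereal_def)
    thus False using assms(6) by simp
  qed
  show ?thesis unfolding floquet_def
  proof (rule inf_combine[OF ne1 ne2 assms(7,8)])
    fix m1 m2 assume m1: "m1 \<in> ?S1" and m2: "m2 \<in> ?S2"
    then obtain \<phi>1 \<phi>2 where "supersol I T B1 d1 m1 \<phi>1" "supersol I T B2 d2 m2 \<phi>2" by blast
    from combine[OF assms(3,4) this assms(7,8)]
    show "Inf (ereal ` {\<mu>. \<exists>\<phi>. supersol I T (\<lambda>j i t x. rpow (B1 j i t x) \<theta> * rpow (B2 j i t x) (1 - \<theta>))
                     (\<lambda>i t x. \<theta> * d1 i t x + (1 - \<theta>) * d2 i t x) \<mu> \<phi>})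
          \<le> ereal (\<theta> * m1 + (1 - \<theta>) * m2)"
      by (intro Inf_lower) blast
  qed
qed

end
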